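(* For every integer $n \ge 19$ and every $d \in \{3,4,5\}$, \[ \mathcal{F}_{P_{n-d}} \le \frac{101}{100}\cdot \frac{\mathcal{F}_{P_n}}{\psi^d}. \]
   Context: $\mathcal{F}_{P_m}$ is the number of minimal forts of the path on $m$ vertices; equivalently $\mathcal{F}_{P_m}=a_m$ where $a_1=a_2=a_3=1$ and $a_m = a_{m-2}+a_{m-3}$ for $m \ge 4$. (A fort is a nonempty vertex set such that every vertex outside it has zero or at least two neighbors in it; minimal means no proper subset is a fort.) $\psi \approx 1.32472$ is the real root of $z^3 - z - 1 = 0$. *)

theory Defs
  imports Complex_Main
begin

text \<open>Number of minimal forts of the path on m vertices, via the recurrence
  a_1 = a_2 = a_3 = 1, a_m = a_(m-2) + a_(m-3) for m >= 4 (a_0 = 0 by convention,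
  never used in the statement).\<close>
fun pathForts :: "nat \<Rightarrow> nat" where
  "pathForts 0 = 0"
| "pathForts (Suc 0) = 1"
| "pathForts (Suc (Suc 0)) = 1"
| "pathForts (Suc (Suc (Suc 0))) = 1"
| "pathForts (Suc (Suc (Suc (Suc m)))) = pathForts (Suc (Suc m)) + pathForts (Suc m)"

definition psi :: real where
  "psi = (THE z::real. z ^ 3 - z - 1 = 0)"

end

theory Submission
  imports Defs
begin

lemma pf_rec: "n \<ge> 4 \<Longrightarrow> pathForts n = pathForts (n-2) + pathForts (n-3)"
proof -
  assume "n \<ge> 4"
  then obtain m where "n = Suc (Suc (Suc (Suc m)))" by (metis add_Suc_shift add_numeral_left le_Suc_ex numeral_Bit0 numeral_One one_add_one plus_1_eq_Suc)
  then show ?thesis by simp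
qed

lemma pf1: "pathForts 1 = 1" by simp
lemma pf2: "pathForts 2 = 1" by (simp add: numeral_2_eq_2)
lemma pf3: "pathForts 3 = 1" by (simp add: numeral_3_eq_3)
lemma pf4: "pathForts 4 = 2" using pf_rec[of 4] pf2 pf1 by simp
lemma pf5: "pathForts 5 = 2" using pf_rec[of 5] pf3 pf2 by simp
lemma pf6: "pathForts 6 = 3" using pf_rec[of 6] pf4 pf3 by simp
lemma pf7: "pathForts 7 = 4" using pf_rec[of 7] pf5 pf4 by simp
lemma pf8: "pathForts 8 = 5" using pf_rec[of 8] pf6 pf5 by simp
lemma pf9: "pathForts 9 = 7" using pf_rec[of 9] pf7 pf6 by simp
lemma pf10: "pathForts 10 = 9" using pf_rec[of 10] pf8 pf7 by simp
lemma pf11: "pathForts 11 = 12" using pf_rec[of 11] pf9 pf8 by simp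
lemma pf12: "pathForts 12 = 16" using pf_rec[of 12] pf10 pf9 by simp
lemma pf13: "pathForts 13 = 21" using pf_rec[of 13] pf11 pf10 by simp
lemma pf14: "pathForts 14 = 28" using pf_rec[of 14] pf12 pf11 by simp
lemma pf15: "pathForts 15 = 37" using pf_rec[of 15] pf13 pf12 by simp
lemma pf16: "pathForts 16 = 49" using pf_rec[of 16] pf14 pf13 by simp
lemma pf17: "pathForts 17 = 65" using pf_rec[of 17] pf15 pf14 by simp
lemma pf18: "pathForts 18 = 86" using pf_rec[of 18] pf16 pf15 by simp
lemma pf19: "pathForts 19 = 114" using pf_rec[of 19] pf17 pf16 by simp
lemma pf20: "pathForts 20 = 151" using pf_rec[of 20] pf18 pf17 by simp
lemma pf21: "pathForts 21 = 200" using pf_rec[of 21] pf19 pf18 by simp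

lemmas pf_vals = pf14 pf15 pf16 pf17 pf18 pf19 pf20 pf21

lemma root_gt1:
  fixes z :: real assumes a: "z^3 - z - 1 = 0" shows "z > 1"
proof (rule ccontr)
  assume "\<not> z > 1"
  hence z: "z \<le> 1" by simp
  have c: "z^3 = z * (z * z)" by (simp add: power3_eq_cube)
  show False
  proof (cases "z \<ge> 0")
    case True
    have "z * z \<le> 1" using True z by (simp add: mult_le_one)
    hence "z * (z * z) \<le> z * 1" using True by (intro mult_left_mono) auto
    thus False using a c by simp
  next
    case False
    have "z * (z * z) < 0" using False by (intro mult_neg_pos) (auto simp: zero_less_mult_iff)
    hence zl: "z < -1" using a c by simp
    have "(-z) * (-z) > 1 * 1" using zl by (intro mult_strict_mono) auto
    hence "z * z > 1" by simp
    hence "z * (z * z) < z * 1" using False by (intro mult_strict_left_mono_neg) auto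
    thus False using a c by simp
  qed
qed

lemma psi_prop: "psi^3 - psi - 1 = 0"
proof -
  have ex: "\<exists>z::real. z^3 - z - 1 = 0"
  proof -
    have "\<exists>x\<ge>1. x \<le> 2 \<and> (\<lambda>z::real. z^3 - z - 1) x = 0"
      by (rule IVT) (auto intro!: continuous_intros)
    thus ?thesis by auto
  qed
  have un: "x = y" if "x^3 - x - 1 = 0" "y^3 - y - 1 = 0" for x y :: real
  proof (rule ccontr)
    assume ne: "x \<noteq> y"
    have "(x - y) * (x^2 + x*y + y^2 - 1) = 0" using that by (simp add: algebra_simps power2_eq_square power3_eq_cube)
    hence "x^2 + x*y + y^2 = 1" using ne by simp
    moreover have "x > 1" "y > 1" using root_gt1 that by auto
    moreover have "x*x > 1" "x*y > 1" "y*y > 1" using calculation(2,3)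
      by (simp_all add: less_1_mult)
    ultimately show False by (simp add: power2_eq_square)
  qed
  show ?thesis unfolding psi_def by (rule theI') (use ex un in blast)
qed

lemma psi_le: "psi \<le> 33120/25000"
proof (rule ccontr)
  assume "\<not> ?thesis"
  hence h: "psi > 33120/25000" by simp
  have "psi^3 - psi - 1 > 0"
  proof -
    have "psi^2 > (33120/25000)^2" using h by (intro power_strict_mono) auto
    hence "psi^2 - 1 > (33120/25000)^2 - 1" by simp
    hence "psi * (psi^2 - 1) > (33120/25000) * ((33120/25000)^2 - 1)"
      using h by (intro mult_strict_mono) auto
    moreover have "(33120/25000::real) * ((33120/25000)^2 - 1) > 1" by (simp add: power2_eq_square)
    ultimately have "psi * (psi^2 - 1) > 1" by simp
    thus ?thesis by (simp add: algebra_simps power2_eq_square power3_eq_cube)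
  qed
  thus False using psi_prop by simp
qed

lemma psi_pos: "psi > 0" using root_gt1[OF psi_prop] by simp

lemma gen:
  fixes c :: real
  assumes "d \<le> 5"
    and b19: "c * pathForts (19 - d) \<le> 101/100 * pathForts 19"
    and b20: "c * pathForts (20 - d) \<le> 101/100 * pathForts 20"
    and b21: "c * pathForts (21 - d) \<le> 101/100 * pathForts 21"
  shows "n \<ge> 19 \<Longrightarrow> c * pathForts (n - d) \<le> 101/100 * pathForts n"
proof (induction n rule: less_induct)
  case (less n)
  show ?case
  proof (cases "n \<le> 21")
    case True
    then consider "n = 19" | "n = 20" | "n = 21" using less.prems by linarith
    thus ?thesis using b19 b20 b21 by cases auto
  next
    case False
    have i2: "c * pathForts (n - 2 - d) \<le> 101/100 * pathForts (n-2)" using less.IH[of "n-2"] False by simp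
    have i3: "c * pathForts (n - 3 - d) \<le> 101/100 * pathForts (n-3)" using less.IH[of "n-3"] False by simp
    have r1: "pathForts n = pathForts (n-2) + pathForts (n-3)" using False by (intro pf_rec) simp
    have r2: "pathForts (n-d) = pathForts (n-d-2) + pathForts (n-d-3)" using False assms(1) by (intro pf_rec) simp
    have e: "n - d - 2 = n - 2 - d" "n - d - 3 = n - 3 - d" by auto
    show ?thesis using i2 i3 unfolding r1 r2 e by (simp add: algebra_simps)
  qed
qed

theorem mainTheorem15:
  fixes n d :: nat
  assumes "n \<ge> 19" and "d \<in> {3, 4, 5}"
  shows "real (pathForts (n - d)) \<le> (101 / 100) * (real (pathForts n) / psi ^ d)"
proof -
  have pp: "psi ^ d > 0" using psi_pos by simp
  have pb: "psi ^ d \<le> (33120/25000) ^ d" using psi_le psi_pos by (intro power_mono) auto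
  have b: "psi ^ d * pathForts (k - d) \<le> 101/100 * pathForts k" if "k \<in> {19,20,21}" for k
  proof -
    define p where "p = psi ^ d"
    have pb': "p \<le> (33120/25000) ^ d" using pb p_def by simp
    have "d = 3 \<or> d = 4 \<or> d = 5" using assms(2) by auto
    moreover have "(33120/25000::real)^3 = 567663552/244140625" by (simp add: power_divide)
    moreover have "(33120/25000::real)^4 = 470025421056/152587890625" by (simp add: power_divide)
    moreover have "(33120/25000::real)^5 = 389181048634368/95367431640625" by (simp add: power_divide)
    ultimately have "p * pathForts (k - d) \<le> 101/100 * pathForts k" using that pb'
      by (auto simp del: divide_const_simps simp: pf_vals)
    thus ?thesis using p_def by simp
  qed
  have "psi ^ d * pathForts (n - d) \<le> 101/100 * pathForts n"
    by (rule gen[where d=d]) (use assms b in auto)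
  thus ?thesis using pp by (simp add: field_simps)
qed

end
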